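(* Let $x\in\Sigma_N$ be such that the Bratteli diagram $\mathcal B_x$ is minimal. Then for every $R>0$ there is $k\in\mathbb{N}$ such that every $\tau\in\Lambda_x$ with $\|\tau\|<R$ is the translation vector between (the control points of) two tiles contained in a single level-$k$ supertile.
   Context: $S_1,\dots,S_N$ are compatible substitution rules on compact prototiles $t_1,\dots,t_M\subset\mathbb{R}^d$: each $S_\ell$ is a family of maps $f_{ijk}(y)=\theta_\ell y+\tau_{ijk}$ ($1\le k\le\kappa_\ell(i,j)$), $\theta_\ell\in(0,1)$, with $t_i=\bigcup_j\bigcup_kf_{ijk}(t_j)$, pieces meeting along boundaries, substitution matrix $F^{(\ell)}_{ij}=\kappa_\ell(i,j)$; compatibility means all supertiles below are tiled edge-to-edge so tilings have finite local complexity. $\Sigma_N=\{1,\dots,N\}^{\mathbb{Z}\setminus\{0\}}$. For $x\in\Sigma_N$, $\mathcal B_x$ is the bi-infinite Bratteli diagram with $M$ vertices per level and $\kappa_{x_n}(i,j)$ edges at level $n$; it is minimal if for every $m$ there is $n>m$ with $F^{(x_n)}\cdots F^{(x_m)}$ strictly positive. A level-$k$ supertile of type $i$ is $(\theta_{x_1}\cdots\theta_{x_k})^{-1}t_i$ subdivided into translates of prototiles by successively applying $S_{x_k},\dots,S_{x_1}$; tilings of $\Omega_x$ (the tiling space, translation-orbit closure) are increasing unions of such nested supertiles. Each prototile carries a fixed marked (control) point in its interior, transported to all its translates. $\Lambda_x$ is the set of return vectors: $\tau$ such that some tiling of $\Omega_x$ contains tiles $t$ and $t+\tau$ which are translates of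 the same prototile. *)

theory Defs
  imports "HOL-Analysis.Analysis"
begin

text \<open>Tiles are pairs (a, v): the prototile with label a translated by the vector v.
  Prototiles are labelled 1..M, substitution rules 1..N.\<close>

definition tile_set :: "(nat \<Rightarrow> 'a::real_vector set) \<Rightarrow> nat \<times> 'a \<Rightarrow> 'a set" where
  "tile_set t p = (\<lambda>y. y + snd p) ` t (fst p)"

definition shift :: "'a::real_vector \<Rightarrow> (nat \<times> 'a) set \<Rightarrow> (nat \<times> 'a) set" where
  "shift u P = (\<lambda>(a, v). (a, v + u)) ` P"

text \<open>Level-k supertile of type i for the rule sequence w (rules w 1, w 2, ...):
  the tile (theta_{w 1} ... theta_{w k})^{-1} t_i subdivided by S_{w k}, ..., S_{w 1}.
  Parameters: theta l (contraction of rule l), kappa l i j (number of pieces of type j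
  in t_i under rule l), tau l i j m (translation of the m-th such piece).\<close>

fun supertile :: "nat \<Rightarrow> (nat \<Rightarrow> real) \<Rightarrow> (nat \<Rightarrow> nat \<Rightarrow> nat \<Rightarrow> nat)
    \<Rightarrow> (nat \<Rightarrow> nat \<Rightarrow> nat \<Rightarrow> nat \<Rightarrow> 'a::real_vector) \<Rightarrow> (nat \<Rightarrow> nat) \<Rightarrow> nat \<Rightarrow> nat
    \<Rightarrow> (nat \<times> 'a) set" where
  "supertile M \<theta> \<kappa> \<tau> w 0 i = {(i, 0)}"
| "supertile M \<theta> \<kappa> \<tau> w (Suc k) i =
     (\<Union>j\<in>{1..M}. \<Union>m\<in>{1..\<kappa> (w (Suc k)) i j}.
        shift ((\<Prod>n\<in>{1..Suc k}. inverse (\<theta> (w n))) *\<^sub>R \<tau> (w (Suc k)) i j m)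
              (supertile M \<theta> \<kappa> \<tau> w k j))"

definition is_tiling :: "nat \<Rightarrow> (nat \<Rightarrow> 'a::real_normed_vector set) \<Rightarrow> (nat \<times> 'a) set \<Rightarrow> bool" where
  "is_tiling M t T \<longleftrightarrow>
     (\<forall>p\<in>T. fst p \<in> {1..M}) \<and>
     (\<Union>p\<in>T. tile_set t p) = UNIV \<and>
     (\<forall>p\<in>T. \<forall>q\<in>T. p \<noteq> q \<longrightarrow> interior (tile_set t p) \<inter> interior (tile_set t q) = {})"

definition pos_seq :: "(int \<Rightarrow> nat) \<Rightarrow> nat \<Rightarrow> nat" where
  "pos_seq x n = x (int n)"

definition tiling_space :: "nat \<Rightarrow> (nat \<Rightarrow> 'a::real_normed_vector set) \<Rightarrow> (nat \<Rightarrow> real)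
    \<Rightarrow> (nat \<Rightarrow> nat \<Rightarrow> nat \<Rightarrow> nat) \<Rightarrow> (nat \<Rightarrow> nat \<Rightarrow> nat \<Rightarrow> nat \<Rightarrow> 'a) \<Rightarrow> (int \<Rightarrow> nat)
    \<Rightarrow> (nat \<times> 'a) set set" where
  "tiling_space M t \<theta> \<kappa> \<tau> x =
     {T. is_tiling M t T \<and>
         (\<forall>P. finite P \<and> P \<subseteq> T \<longrightarrow>
            (\<exists>k i u. i \<in> {1..M} \<and> shift u P \<subseteq> supertile M \<theta> \<kappa> \<tau> (pos_seq x) k i))}"

definition return_vectors :: "nat \<Rightarrow> (nat \<Rightarrow> 'a::real_normed_vector set) \<Rightarrow> (nat \<Rightarrow> real)
    \<Rightarrow> (nat \<Rightarrow> nat \<Rightarrow> nat \<Rightarrow> nat) \<Rightarrow> (nat \<Rightarrow> nat \<Rightarrow> nat \<Rightarrow> nat \<Rightarrow> 'a) \<Rightarrow> (int \<Rightarrow> nat)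
    \<Rightarrow> 'a set" where
  "return_vectors M t \<theta> \<kappa> \<tau> x =
     {v. \<exists>T\<in>tiling_space M t \<theta> \<kappa> \<tau> x. \<exists>a u. (a, u) \<in> T \<and> (a, u + v) \<in> T}"

text \<open>Matrices are functions nat => nat => nat indexed by 1..M.\<close>

definition mat_mult :: "nat \<Rightarrow> (nat \<Rightarrow> nat \<Rightarrow> nat) \<Rightarrow> (nat \<Rightarrow> nat \<Rightarrow> nat) \<Rightarrow> nat \<Rightarrow> nat \<Rightarrow> nat" where
  "mat_mult M A B i j = (\<Sum>l\<in>{1..M}. A i l * B l j)"

text \<open>F^{(x_n)} ... F^{(x_m)} over the indices m..n with 0 omitted, where F^{(l)} = kappa l.\<close>

definition subst_mat_prod :: "nat \<Rightarrow> (nat \<Rightarrow> nat \<Rightarrow> nat \<Rightarrow> nat) \<Rightarrow> (int \<Rightarrow> nat) \<Rightarrow> int \<Rightarrow> int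
    \<Rightarrow> nat \<Rightarrow> nat \<Rightarrow> nat" where
  "subst_mat_prod M \<kappa> x m n =
     foldl (\<lambda>A l. mat_mult M (\<kappa> (x l)) A) (\<lambda>i j. if i = j then 1 else 0)
       (filter (\<lambda>l. l \<noteq> 0) [m..n])"

definition minimal_bratteli :: "nat \<Rightarrow> (nat \<Rightarrow> nat \<Rightarrow> nat \<Rightarrow> nat) \<Rightarrow> (int \<Rightarrow> nat) \<Rightarrow> bool" where
  "minimal_bratteli M \<kappa> x \<longleftrightarrow>
     (\<forall>m. m \<noteq> 0 \<longrightarrow> (\<exists>n>m. n \<noteq> 0 \<and>
        (\<forall>i\<in>{1..M}. \<forall>j\<in>{1..M}. subst_mat_prod M \<kappa> x m n i j > 0)))"

definition supertiles_FLC :: "nat \<Rightarrow> nat \<Rightarrow> (nat \<Rightarrow> 'a::real_normed_vector set) \<Rightarrow> (nat \<Rightarrow> real)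
    \<Rightarrow> (nat \<Rightarrow> nat \<Rightarrow> nat \<Rightarrow> nat) \<Rightarrow> (nat \<Rightarrow> nat \<Rightarrow> nat \<Rightarrow> nat \<Rightarrow> 'a) \<Rightarrow> bool" where
  "supertiles_FLC M N t \<theta> \<kappa> \<tau> \<longleftrightarrow>
     (\<forall>R>0. \<exists>F. finite F \<and>
        (\<forall>w k i P. (\<forall>n\<ge>1. w n \<in> {1..N}) \<and> i \<in> {1..M} \<and> P \<subseteq> supertile M \<theta> \<kappa> \<tau> w k i \<and>
            (\<exists>y. \<forall>p\<in>P. tile_set t p \<subseteq> ball y R) \<longrightarrow> (\<exists>Q\<in>F. \<exists>u. P = shift u Q)))"

end

theory Submission
  imports Defs
begin

lemma shift_shift: "shift a (shift b P) = shift (b + a) P"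
  unfolding shift_def image_image by (simp add: case_prod_beta add.assoc)

lemma mem_shift: "(a, z) \<in> P \<Longrightarrow> (a, z + u) \<in> shift u P"
  unfolding shift_def by force

lemma mem_shiftD: "(a, z) \<in> shift u Q \<Longrightarrow> \<exists>q\<in>Q. z = snd q + u"
  unfolding shift_def by auto (metis snd_conv)

lemma supertile_step:
  assumes "j \<in> {1..M}" "1 \<le> \<kappa> (w (Suc k)) j i" "i \<in> {1..M}"
  shows "\<exists>s. shift s (supertile M \<theta> \<kappa> \<tau> w k i) \<subseteq> supertile M \<theta> \<kappa> \<tau> w (Suc k) j"
proof -
  let ?S = "(\<Prod>n\<in>{1..Suc k}. inverse (\<theta> (w n))) *\<^sub>R \<tau> (w (Suc k)) j i 1"
  have "shift ?S (supertile M \<theta> \<kappa> \<tau> w k i) \<subseteq> (\<Union>m\<in>{1..\<kappa> (w (Suc k)) j i}.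
        shift ((\<Prod>n\<in>{1..Suc k}. inverse (\<theta> (w n))) *\<^sub>R \<tau> (w (Suc k)) j i m) (supertile M \<theta> \<kappa> \<tau> w k i))"
    by (rule UN_upper[of 1 _ "\<lambda>m. shift ((\<Prod>n\<in>{1..Suc k}. inverse (\<theta> (w n))) *\<^sub>R \<tau> (w (Suc k)) j i m) (supertile M \<theta> \<kappa> \<tau> w k i)"]) (use assms in simp)
  also have "\<dots> \<subseteq> supertile M \<theta> \<kappa> \<tau> w (Suc k) j"
    unfolding supertile.simps by (rule UN_upper[OF assms(3)])
  finally show ?thesis by blast
qed

lemma supertile_mono:
  assumes col: "\<forall>k i. i \<in> {1..M} \<longrightarrow> (\<exists>j\<in>{1..M}. 1 \<le> \<kappa> (w (Suc k)) j i)"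
    and i: "i \<in> {1..M}" and kk: "k \<le> k'"
  shows "\<exists>i'\<in>{1..M}. \<exists>s. shift s (supertile M \<theta> \<kappa> \<tau> w k i) \<subseteq> supertile M \<theta> \<kappa> \<tau> w k' i'"
  using kk
proof (induction k' rule: dec_induct)
  case base
  have "shift 0 (supertile M \<theta> \<kappa> \<tau> w k i) = supertile M \<theta> \<kappa> \<tau> w k i"
    unfolding shift_def by (auto simp: image_iff)
  then show ?case using i by (metis order_refl)
next
  case (step n)
  then obtain i' s where i': "i' \<in> {1..M}" and s: "shift s (supertile M \<theta> \<kappa> \<tau> w k i) \<subseteq> supertile M \<theta> \<kappa> \<tau> w n i'"
    by blast
  obtain j where j: "j \<in> {1..M}" "1 \<le> \<kappa> (w (Suc n)) j i'" using col i' by blast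
  obtain s' where s': "shift s' (supertile M \<theta> \<kappa> \<tau> w n i') \<subseteq> supertile M \<theta> \<kappa> \<tau> w (Suc n) j"
    using supertile_step j i' by blast
  have "shift s' (shift s (supertile M \<theta> \<kappa> \<tau> w k i)) \<subseteq> shift s' (supertile M \<theta> \<kappa> \<tau> w n i')"
    using s unfolding shift_def by blast
  then have "shift (s + s') (supertile M \<theta> \<kappa> \<tau> w k i) \<subseteq> supertile M \<theta> \<kappa> \<tau> w (Suc n) j"
    using s' by (simp add: shift_shift)
  then show ?case using j by blast
qed

lemma foldl_col_zero:
  assumes "\<forall>l\<in>{1..M}. A l i = 0"
  shows "\<forall>l\<in>{1..M}. foldl (\<lambda>A l. mat_mult M (\<kappa> (x l)) A) A xs l i = 0"
  using assms
proof (induction xs arbitrary: A)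
  case Nil then show ?case by simp
next
  case (Cons a xs)
  have "\<forall>l\<in>{1..M}. mat_mult M (\<kappa> (x a)) A l i = 0"
  proof
    fix l assume "l \<in> {1..M}"
    show "mat_mult M (\<kappa> (x a)) A l i = 0"
      unfolding mat_mult_def by (rule sum.neutral) (use Cons.prems in simp)
  qed
  then have "\<forall>l\<in>{1..M}. foldl (\<lambda>A l. mat_mult M (\<kappa> (x l)) A) (mat_mult M (\<kappa> (x a)) A) xs l i = 0"
    by (rule Cons.IH)
  then show ?case by (simp only: foldl_Cons)
qed

lemma col_nonzero:
  assumes M: "M \<ge> 1" and minimal: "minimal_bratteli M \<kappa> x" and m: "m > 0" and i: "i \<in> {1..M}"
  shows "\<exists>j\<in>{1..M}. 1 \<le> \<kappa> (x m) j i"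
proof (rule ccontr)
  assume "\<not> ?thesis"
  then have z: "\<forall>j\<in>{1..M}. \<kappa> (x m) j i = 0" by force
  have "m \<noteq> 0" using m by simp
  obtain n where n: "n > m" "n \<noteq> 0" and pos: "\<forall>i\<in>{1..M}. \<forall>j\<in>{1..M}. subst_mat_prod M \<kappa> x m n i j > 0"
    using minimal \<open>m \<noteq> 0\<close> unfolding minimal_bratteli_def by blast
  have lst: "filter (\<lambda>l. l \<noteq> 0) [m..n] = m # filter (\<lambda>l. l \<noteq> 0) [m+1..n]"
  proof -
    have "[m..n] = m # [m+1..n]" by (rule upto_rec1) (use n in simp)
    then show ?thesis using m by simp
  qed
  let ?I = "(\<lambda>i j. if i = j then 1 else 0) :: nat \<Rightarrow> nat \<Rightarrow> nat"
  have "\<forall>l\<in>{1..M}. mat_mult M (\<kappa> (x m)) ?I l i = 0"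
  proof
    fix l assume "l \<in> {1..M}"
    have "mat_mult M (\<kappa> (x m)) ?I l i = (\<Sum>r\<in>{1..M}. \<kappa> (x m) l r * (if r = i then 1 else 0))"
      unfolding mat_mult_def by simp
    also have "\<dots> = \<kappa> (x m) l i" using i by (simp add: if_distrib sum.delta cong: if_cong)
    finally show "mat_mult M (\<kappa> (x m)) ?I l i = 0" using z \<open>l \<in> {1..M}\<close> by simp
  qed
  then have "\<forall>l\<in>{1..M}. subst_mat_prod M \<kappa> x m n l i = 0"
    unfolding subst_mat_prod_def lst by (simp add: foldl_col_zero)
  moreover have "(1::nat) \<in> {1..M}" using M by simp
  ultimately show False using pos i by fastforce
qed

lemma finite_uniform:
  assumes "finite V" "\<forall>v\<in>V. \<exists>k0::nat. \<forall>k\<ge>k0. P v k"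
  shows "\<exists>k. \<forall>v\<in>V. P v k"
proof -
  obtain f where f: "\<forall>v\<in>V. \<forall>k\<ge>f v. P v k" using assms(2) by metis
  let ?k = "Max (insert 0 (f ` V))"
  have "\<forall>v\<in>V. f v \<le> ?k" using assms(1) by simp
  then show ?thesis using f by blast
qed

theorem lemma4:
  fixes M N :: nat
    and t :: "nat \<Rightarrow> 'a::euclidean_space set"
    and c :: "nat \<Rightarrow> 'a"
    and \<theta> :: "nat \<Rightarrow> real"
    and \<kappa> :: "nat \<Rightarrow> nat \<Rightarrow> nat \<Rightarrow> nat"
    and \<tau> :: "nat \<Rightarrow> nat \<Rightarrow> nat \<Rightarrow> nat \<Rightarrow> 'a"
    and x :: "int \<Rightarrow> nat"
  assumes M: "M \<ge> 1" and N: "N \<ge> 1"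
    and compact_tiles: "\<forall>i\<in>{1..M}. compact (t i)"
    and control_pts: "\<forall>i\<in>{1..M}. c i \<in> interior (t i)"
    and theta: "\<forall>l\<in>{1..N}. 0 < \<theta> l \<and> \<theta> l < 1"
    and subst: "\<forall>l\<in>{1..N}. \<forall>i\<in>{1..M}.
        t i = (\<Union>j\<in>{1..M}. \<Union>k\<in>{1..\<kappa> l i j}. (\<lambda>y. \<theta> l *\<^sub>R y + \<tau> l i j k) ` t j)"
    and pieces: "\<forall>l\<in>{1..N}. \<forall>i\<in>{1..M}. \<forall>j\<in>{1..M}. \<forall>k\<in>{1..\<kappa> l i j}.
        \<forall>j'\<in>{1..M}. \<forall>k'\<in>{1..\<kappa> l i j'}. (j, k) \<noteq> (j', k') \<longrightarrow>
          interior ((\<lambda>y. \<theta> l *\<^sub>R y + \<tau> l i j k) ` t j) \<inter>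
          interior ((\<lambda>y. \<theta> l *\<^sub>R y + \<tau> l i j' k') ` t j') = {}"
    and compatible: "supertiles_FLC M N t \<theta> \<kappa> \<tau>"
    and x_in_Sigma: "\<forall>n. n \<noteq> 0 \<longrightarrow> x n \<in> {1..N}"
    and minimal: "minimal_bratteli M \<kappa> x"
  shows "\<forall>R>0. \<exists>k::nat. \<forall>v\<in>return_vectors M t \<theta> \<kappa> \<tau> x. norm v < R \<longrightarrow>
           (\<exists>i\<in>{1..M}. \<exists>p\<in>supertile M \<theta> \<kappa> \<tau> (pos_seq x) k i.
              \<exists>q\<in>supertile M \<theta> \<kappa> \<tau> (pos_seq x) k i.
                 v = (c (fst q) + snd q) - (c (fst p) + snd p))"
proof (intro allI impI)
  fix R :: real assume R: "R > 0"
  define w where "w = pos_seq x"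
  define V where "V = {v \<in> return_vectors M t \<theta> \<kappa> \<tau> x. norm v < R}"
  define Pr where "Pr v k \<longleftrightarrow> (\<exists>i\<in>{1..M}. \<exists>p\<in>supertile M \<theta> \<kappa> \<tau> w k i.
              \<exists>q\<in>supertile M \<theta> \<kappa> \<tau> w k i. v = (c (fst q) + snd q) - (c (fst p) + snd p))" for v k
  have w_range: "\<forall>n\<ge>1. w n \<in> {1..N}"
    using x_in_Sigma unfolding w_def pos_seq_def by auto
  have col: "\<forall>k i. i \<in> {1..M} \<longrightarrow> (\<exists>j\<in>{1..M}. 1 \<le> \<kappa> (w (Suc k)) j i)"
  proof (intro allI impI)
    fix k i assume "i \<in> {1..M}"
    from col_nonzero[OF M minimal, of "int (Suc k)" i] this
    show "\<exists>j\<in>{1..M}. 1 \<le> \<kappa> (w (Suc k)) j i" unfolding w_def pos_seq_def by simp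
  qed
  have basic: "\<exists>T a u k i s. is_tiling M t T \<and> (a, u) \<in> T \<and> (a, u + v) \<in> T \<and> i \<in> {1..M} \<and>
      (a, u + s) \<in> supertile M \<theta> \<kappa> \<tau> w k i \<and> (a, u + v + s) \<in> supertile M \<theta> \<kappa> \<tau> w k i"
    if rv: "v \<in> return_vectors M t \<theta> \<kappa> \<tau> x" for v
  proof -
    obtain T a u where T: "T \<in> tiling_space M t \<theta> \<kappa> \<tau> x" and au: "(a, u) \<in> T" "(a, u + v) \<in> T"
      using rv unfolding return_vectors_def by blast
    have fP: "finite {(a, u), (a, u + v)} \<and> {(a, u), (a, u + v)} \<subseteq> T" using au by simp
    have all: "\<forall>P. finite P \<and> P \<subseteq> T \<longrightarrow>
            (\<exists>k i u. i \<in> {1..M} \<and> shift u P \<subseteq> supertile M \<theta> \<kappa> \<tau> (pos_seq x) k i)"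
      using T unfolding tiling_space_def mem_Collect_eq by (rule conjunct2)
    have "finite {(a, u), (a, u + v)} \<and> {(a, u), (a, u + v)} \<subseteq> T \<longrightarrow>
            (\<exists>k i s. i \<in> {1..M} \<and> shift s {(a, u), (a, u + v)} \<subseteq> supertile M \<theta> \<kappa> \<tau> (pos_seq x) k i)"
      using all by (rule spec)
    from this fP obtain k i s where i: "i \<in> {1..M}" and sub: "shift s {(a, u), (a, u + v)} \<subseteq> supertile M \<theta> \<kappa> \<tau> w k i"
      unfolding w_def by blast
    have "(a, u + s) \<in> shift s {(a, u), (a, u + v)}" by (rule mem_shift) simp
    moreover have "(a, u + v + s) \<in> shift s {(a, u), (a, u + v)}" by (rule mem_shift) simp
    ultimately have "(a, u + s) \<in> supertile M \<theta> \<kappa> \<tau> w k i" "(a, u + v + s) \<in> supertile M \<theta> \<kappa> \<tau> w k i"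
      using sub by blast+
    moreover have "is_tiling M t T" using T unfolding tiling_space_def mem_Collect_eq by (rule conjunct1)
    ultimately show ?thesis using au i by blast
  qed
  have ev: "\<forall>v\<in>V. \<exists>k0. \<forall>k\<ge>k0. Pr v k"
  proof
    fix v assume "v \<in> V"
    then have rv: "v \<in> return_vectors M t \<theta> \<kappa> \<tau> x" unfolding V_def by simp
    from basic[OF rv] obtain T a u k i s where i: "i \<in> {1..M}" and
      ps: "(a, u + s) \<in> supertile M \<theta> \<kappa> \<tau> w k i" "(a, u + v + s) \<in> supertile M \<theta> \<kappa> \<tau> w k i"
      by blast
    have "Pr v k'" if kk': "k \<le> k'" for k'
    proof -
      obtain i' s' where i': "i' \<in> {1..M}" and sub: "shift s' (supertile M \<theta> \<kappa> \<tau> w k i) \<subseteq> supertile M \<theta> \<kappa> \<tau> w k' i'"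
        using supertile_mono[where \<kappa>=\<kappa> and w=w and M=M and \<theta>=\<theta> and \<tau>=\<tau>, OF col i kk'] by blast
      have p1: "(a, u + s + s') \<in> supertile M \<theta> \<kappa> \<tau> w k' i'"
        using sub mem_shift[OF ps(1), of s'] by blast
      have p2: "(a, u + v + s + s') \<in> supertile M \<theta> \<kappa> \<tau> w k' i'"
        using sub mem_shift[OF ps(2), of s'] by blast
      have veq: "v = (c (fst (a, u + v + s + s')) + snd (a, u + v + s + s')) - (c (fst (a, u + s + s')) + snd (a, u + s + s'))"
        by (simp add: algebra_simps)
      show ?thesis unfolding Pr_def using i' p1 p2 veq by blast
    qed
    then show "\<exists>k0. \<forall>k\<ge>k0. Pr v k" by blast
  qed
  have fin: "finite V"
  proof -
    have "bounded (\<Union>a\<in>{1..M}. t a)"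
      using compact_tiles by (auto intro!: bounded_UN compact_imp_bounded)
    then obtain B where B: "\<And>y. y \<in> (\<Union>a\<in>{1..M}. t a) \<Longrightarrow> norm y \<le> B"
      unfolding bounded_iff by blast
    define R' where "R' = \<bar>B\<bar> + R + 1"
    have R': "R' > 0" unfolding R'_def using R by simp
    have "\<exists>F. finite F \<and>
        (\<forall>w k i P. (\<forall>n\<ge>1. w n \<in> {1..N}) \<and> i \<in> {1..M} \<and> P \<subseteq> supertile M \<theta> \<kappa> \<tau> w k i \<and>
            (\<exists>y. \<forall>p\<in>P. tile_set t p \<subseteq> ball y R') \<longrightarrow> (\<exists>Q\<in>F. \<exists>u. P = shift u Q))"
      using compatible R' unfolding supertiles_FLC_def by blast
    then obtain F where F: "finite F" and FF: "\<forall>w k i P. (\<forall>n\<ge>1. w n \<in> {1..N}) \<and> i \<in> {1..M} \<and> P \<subseteq> supertile M \<theta> \<kappa> \<tau> w k i \<and>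
            (\<exists>y. \<forall>p\<in>P. tile_set t p \<subseteq> ball y R') \<longrightarrow> (\<exists>Q\<in>F. \<exists>u. P = shift u Q)"
      by blast
    define G where "G = {Q \<in> F. finite Q}"
    define D where "D = (\<Union>Q\<in>G. (\<lambda>(q1, q2). snd q2 - snd q1) ` (Q \<times> Q))"
    have "finite G" unfolding G_def using F by simp
    then have "finite D" unfolding D_def by (auto simp: G_def)
    moreover have "V \<subseteq> D"
    proof
      fix v assume v: "v \<in> V"
      then have nv: "norm v < R" and rv: "v \<in> return_vectors M t \<theta> \<kappa> \<tau> x" unfolding V_def by simp_all
      from basic[OF rv] obtain T a u k i s where T: "is_tiling M t T" and au: "(a, u) \<in> T" and i: "i \<in> {1..M}" and
        ps: "(a, u + s) \<in> supertile M \<theta> \<kappa> \<tau> w k i" "(a, u + v + s) \<in> supertile M \<theta> \<kappa> \<tau> w k i"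
        by blast
      have "\<forall>p\<in>T. fst p \<in> {1..M}" using T unfolding is_tiling_def by (rule conjunct1)
      then have a: "a \<in> {1..M}" using au by force
      define P where "P = {(a, u + s), (a, u + v + s)}"
      have ball: "\<forall>p\<in>P. tile_set t p \<subseteq> ball (u + s) R'"
      proof
        fix p assume pP: "p \<in> P"
        show "tile_set t p \<subseteq> ball (u + s) R'"
        proof
          fix z assume z: "z \<in> tile_set t p"
          have fp: "fst p = a" using pP unfolding P_def by auto
          obtain y where y: "y \<in> t a" and zy: "z = y + snd p" using z fp
            unfolding tile_set_def by auto
          have ny: "norm y \<le> B" using B a y by blast
          have "dist (u + s) z \<le> norm y + norm v"
          proof (cases "p = (a, u + s)")
            case True then show ?thesis using zy by (simp add: dist_norm)
          next
            case False then have "snd p = u + v + s" using pP unfolding P_def by auto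
            then have "dist (u + s) z = norm (y + v)" using zy by (simp add: dist_norm norm_minus_commute algebra_simps)
            also have "\<dots> \<le> norm y + norm v" by (rule norm_triangle_ineq)
            finally show ?thesis .
          qed
          then show "z \<in> ball (u + s) R'" using ny nv unfolding R'_def by simp
        qed
      qed
      have Psub: "P \<subseteq> supertile M \<theta> \<kappa> \<tau> w k i" using ps unfolding P_def by simp
      have "(\<forall>n\<ge>1. w n \<in> {1..N}) \<and> i \<in> {1..M} \<and> P \<subseteq> supertile M \<theta> \<kappa> \<tau> w k i \<and>
            (\<exists>y. \<forall>p\<in>P. tile_set t p \<subseteq> ball y R')"
        using w_range i Psub ball by blast
      moreover have "(\<forall>n\<ge>1. w n \<in> {1..N}) \<and> i \<in> {1..M} \<and> P \<subseteq> supertile M \<theta> \<kappa> \<tau> w k i \<and>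
            (\<exists>y. \<forall>p\<in>P. tile_set t p \<subseteq> ball y R') \<longrightarrow> (\<exists>Q\<in>F. \<exists>u. P = shift u Q)"
        using FF by blast
      ultimately obtain Q u0 where Q: "Q \<in> F" and PQ: "P = shift u0 Q" by blast
      have "finite P" unfolding P_def by simp
      then have "finite (shift u0 Q)" using PQ by simp
      moreover have "inj_on (\<lambda>(a, v). (a, v + u0)) Q" by (auto simp: inj_on_def)
      ultimately have "finite Q" unfolding shift_def using finite_imageD by blast
      then have QG: "Q \<in> G" using Q unfolding G_def by simp
      have "(a, u + s) \<in> shift u0 Q" "(a, u + v + s) \<in> shift u0 Q" using PQ unfolding P_def by auto
      then obtain q1 q2 where q1: "q1 \<in> Q" "u + s = snd q1 + u0" and q2: "q2 \<in> Q" "u + v + s = snd q2 + u0"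
        using mem_shiftD by metis
      have "v = (u + v + s) - (u + s)" by simp
      also have "\<dots> = (snd q2 + u0) - (snd q1 + u0)" using q1 q2 by simp
      also have "\<dots> = snd q2 - snd q1" by simp
      finally have veq: "v = snd q2 - snd q1" .
      have "v \<in> (\<lambda>(q1, q2). snd q2 - snd q1) ` (Q \<times> Q)"
        by (rule image_eqI[where x="(q1, q2)"]) (use veq q1 q2 in simp_all)
      then show "v \<in> D" unfolding D_def using QG by blast
    qed
    ultimately show ?thesis by (rule finite_subset[rotated])
  qed
  obtain k where kk: "\<forall>v\<in>V. Pr v k" using finite_uniform[OF fin ev] by blast
  show "\<exists>k::nat. \<forall>v\<in>return_vectors M t \<theta> \<kappa> \<tau> x. norm v < R \<longrightarrow>
           (\<exists>i\<in>{1..M}. \<exists>p\<in>supertile M \<theta> \<kappa> \<tau> (pos_seq x) k i.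
              \<exists>q\<in>supertile M \<theta> \<kappa> \<tau> (pos_seq x) k i.
                 v = (c (fst q) + snd q) - (c (fst p) + snd p))"
  proof (intro exI ballI impI)
    fix v assume "v \<in> return_vectors M t \<theta> \<kappa> \<tau> x" "norm v < R"
    then have "v \<in> V" unfolding V_def by simp
    then have "Pr v k" using kk by blast
    then show "\<exists>i\<in>{1..M}. \<exists>p\<in>supertile M \<theta> \<kappa> \<tau> (pos_seq x) k i.
              \<exists>q\<in>supertile M \<theta> \<kappa> \<tau> (pos_seq x) k i.
                 v = (c (fst q) + snd q) - (c (fst p) + snd p)"
      unfolding Pr_def w_def .
  qed
qed

end
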